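(* In the setting below, one of the following holds: (1) $\max_{g\in G_-}|\delta(g)| = E_k-\lfloor E_k\rfloor_2$; or (2) $\max_{g\in G_-}|\delta(g)|\ge E_k-\lfloor E_k\rfloor_2+2$.
   Context: Let $\Lambda_{24}\subset\mathbb{R}^{24}$ be the Leech lattice scaled so its minimal nonzero vectors have length $2$, and $\mathcal C$ the set of its $196560$ minimal vectors. Let $\mathrm{Co}_0$ be the finite group of linear isometries of $\mathbb{R}^{24}$ mapping $\Lambda_{24}$ onto itself; it acts (transitively) on $\mathcal C$. A set $X\subseteq\mathcal C$ is antipodal if $X=-X$. Fix an antipodal $S\subseteq\mathcal C$ with $\langle x,y\rangle\le1$ for distinct $x,y\in S$. Let $k\ge1$, $S_1=S$, $g_1=\mathrm{id}$, and for $2\le j\le k$ let $S_j=g_jS\setminus(S_1\cup\dots\cup S_{j-1})$ for some $g_j\in\mathrm{Co}_0$, where moreover $|S_j|\ge|S|\bigl(1-\sum_{i<j}|S_i|/|\mathcal C|\bigr)$. Put $U_k=S_1\cup\dots\cup S_k$ and $E_k=\mathbb{E}_{g}\,|gS\cap U_k|$ for $g$ uniformly random in $\mathrm{Co}_0$. For real $x$, $\lfloor x\rfloor_2$ is the greatest even integer $\le x$ and $\lceil x\rceil_2$ the least even integer $\ge x$. For $g\in\mathrm{Co}_0$ let $\delta(g)=|gS\cap U_k|-E_k$, and $G_+=\{g:\delta(g)>0\}$, $G_-=\{g:\delta(g)<0\}$. *)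

theory Defs
  imports "HOL-Analysis.Analysis" "HOL-Library.Numeral_Type"
begin

text \<open>Extended binary Golay code on coordinate positions 0..23: the GF(2)-span of the 12
  vectors obtained from the cyclic shifts (j = 0..11) of the generator polynomial
  1 + x^2 + x^4 + x^5 + x^6 + x^10 + x^11 of the [23,12,7] cyclic Golay code,
  each extended by the parity position 23. Codewords are represented as subsets of {0..23}.\<close>

definition golay_gen :: "nat \<Rightarrow> nat set" where
  "golay_gen j = (\<lambda>e. j + e) ` {0, 2, 4, 5, 6, 10, 11} \<union> {23}"

definition golay :: "nat set set" where
  "golay = {{i. i < 24 \<and> odd (card {j \<in> T. i \<in> golay_gen j})} | T. T \<subseteq> {..<12}}"

text \<open>Integer coordinates of (sqrt 8 times) Leech lattice vectors (Conway--Sloane).\<close>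

definition leech_coords :: "int^24 \<Rightarrow> bool" where
  "leech_coords x \<longleftrightarrow>
     ((\<forall>i. even (x $ i)) \<and> (\<Sum>i\<in>UNIV. x $ i) mod 8 = 0 \<and>
        {n. n < 24 \<and> x $ (of_nat n) mod 4 = 2} \<in> golay)
   \<or> ((\<forall>i. odd (x $ i)) \<and> (\<Sum>i\<in>UNIV. x $ i) mod 8 = 4 \<and>
        {n. n < 24 \<and> x $ (of_nat n) mod 4 = 3} \<in> golay)"

text \<open>The Leech lattice, scaled so that minimal nonzero vectors have length 2.\<close>

definition leech :: "(real^24) set" where
  "leech = {(\<chi> i. real_of_int (x $ i) / sqrt 8) | x. leech_coords x}"

definition leech_min :: "(real^24) set" where
  "leech_min = {v \<in> leech. norm v = 2}"

definition Co0 :: "(real^24 \<Rightarrow> real^24) set" where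
  "Co0 = {f. linear f \<and> (\<forall>x. norm (f x) = norm x) \<and> f ` leech = leech}"

definition floor2 :: "real \<Rightarrow> real" where
  "floor2 x = 2 * of_int \<lfloor>x / 2\<rfloor>"

end

theory Submission
  imports Defs
begin

lemma even_card_antipodal:
  fixes A :: "(real^24) set"
  assumes "uminus ` A = A" "0 \<notin> A"
  shows "even (card A)"
proof (cases "finite A")
  case False then show ?thesis by simp
next
  case True
  have "\<And>A :: (real^24) set. finite A \<Longrightarrow> card A = n \<Longrightarrow> uminus ` A = A \<Longrightarrow> 0 \<notin> A \<Longrightarrow> even n" for n
  proof (induction n rule: less_induct)
    case (less n A)
    show ?case
    proof (cases "A = {}")
      case True then show ?thesis using less by simp
    next
      case False
      then obtain a where a: "a \<in> A" by blast
      have ma: "-a \<in> A" using a less(4) by (metis imageI)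
      have neq: "-a \<noteq> a"
      proof
        assume "-a = a"
        then have "(2::real) *\<^sub>R a = 0" by (metis add.right_inverse scaleR_2)
        then show False using a less(5) by simp
      qed
      define B where "B = A - {a, -a}"
      have cB: "card B = n - 2" using less(2,3) a ma neq unfolding B_def
        by (simp add: card_Diff_subset)
      have n2: "n \<ge> 2" using less(2,3) a ma neq
        by (metis card_2_iff card_mono empty_subsetI insert_subset)
      have "uminus ` B = B"
      proof -
        have "uminus ` B = uminus ` A - uminus ` {a, -a}" unfolding B_def
          by (simp add: image_set_diff inj_def)
        also have "\<dots> = B" using less(4) unfolding B_def by auto
        finally show ?thesis .
      qed
      moreover have "0 \<notin> B" using less(5) unfolding B_def by auto
      ultimately have "even (n - 2)" using less(1)[of "n-2" B] cB less(2) n2 unfolding B_def by auto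
      then show ?thesis using n2 by (simp add: even_diff_nat)
    qed
  qed
  then show ?thesis using True assms by blast
qed

lemma aux2: "(a::real) + 1 \<le> b \<Longrightarrow> 2 \<le> 2 * (b - a)" by (simp add: right_diff_distrib)

lemma aux3: "M = X + 2 * y \<Longrightarrow> 2 \<le> 2 * (y::real) \<Longrightarrow> X + 2 \<le> M" by linarith

lemma Co0_linear: "h \<in> Co0 \<Longrightarrow> linear h" unfolding Co0_def by auto

lemma antipodal_image:
  assumes "linear h" "uminus ` A = A"
  shows "uminus ` (h ` A) = h ` A"
proof -
  have "uminus ` (h ` A) = h ` (uminus ` A)"
    using linear_neg[OF assms(1)] by (auto simp: image_iff)
  then show ?thesis using assms(2) by simp
qed

lemma antipodal_diff:
  fixes A B :: "(real^24) set"
  assumes "uminus ` A = A" "uminus ` B = B"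
  shows "uminus ` (A - B) = A - B"
  using assms by (simp add: image_set_diff inj_def)

theorem lemma4p2:
  fixes S :: "(real^24) set" and k :: nat
    and g :: "nat \<Rightarrow> (real^24 \<Rightarrow> real^24)" and Sj :: "nat \<Rightarrow> (real^24) set"
    and U :: "(real^24) set" and E :: real and \<delta> :: "(real^24 \<Rightarrow> real^24) \<Rightarrow> real"
    and Gminus :: "(real^24 \<Rightarrow> real^24) set"
  assumes S_sub: "S \<subseteq> leech_min"
    and S_antipodal: "uminus ` S = S"
    and S_inner: "\<forall>x\<in>S. \<forall>y\<in>S. x \<noteq> y \<longrightarrow> inner x y \<le> 1"
    and k_pos: "k \<ge> 1"
    and S1: "Sj 1 = S"
    and g1: "g 1 = id"
    and g_Co0: "\<forall>j\<in>{2..k}. g j \<in> Co0"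
    and Sj_def: "\<forall>j\<in>{2..k}. Sj j = g j ` S - (\<Union>i\<in>{1..<j}. Sj i)"
    and Sj_large: "\<forall>j\<in>{2..k}. real (card (Sj j))
                     \<ge> real (card S) * (1 - (\<Sum>i\<in>{1..<j}. real (card (Sj i))) / real (card leech_min))"
    and U_def: "U = (\<Union>j\<in>{1..k}. Sj j)"
    and E_def: "E = (\<Sum>h\<in>Co0. real (card (h ` S \<inter> U))) / real (card Co0)"
    and delta_def: "\<delta> = (\<lambda>h. real (card (h ` S \<inter> U)) - E)"
    and Gminus_def: "Gminus = {h \<in> Co0. \<delta> h < 0}"
  shows "Max (insert 0 ((\<lambda>h. \<bar>\<delta> h\<bar>) ` Gminus)) = E - floor2 E
       \<or> Max (insert 0 ((\<lambda>h. \<bar>\<delta> h\<bar>) ` Gminus)) \<ge> E - floor2 E + 2"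
proof -
  have Sj_anti: "j \<in> {1..k} \<Longrightarrow> uminus ` Sj j = Sj j" for j
  proof (induction j rule: less_induct)
    case (less j)
    show ?case
    proof (cases "j = 1")
      case True then show ?thesis using S1 S_antipodal by simp
    next
      case False
      then have j2: "j \<in> {2..k}" using less(2) by auto
      have "uminus ` (\<Union>i\<in>{1..<j}. Sj i) = (\<Union>i\<in>{1..<j}. Sj i)"
        using less(1) less(2) by (auto simp: image_UN)
      moreover have "uminus ` (g j ` S) = g j ` S"
        using antipodal_image[OF Co0_linear S_antipodal] g_Co0 j2 by blast
      ultimately show ?thesis using Sj_def j2 antipodal_diff by metis
    qed
  qed
  have U_anti: "uminus ` U = U" unfolding U_def using Sj_anti by (auto simp: image_UN)
  define c where "c h = card (h ` S \<inter> U)" for h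
  have c_even: "even (c h)" if "h \<in> Co0" for h
  proof -
    have "uminus ` (h ` S) = h ` S"
      using antipodal_image[OF Co0_linear[OF that] S_antipodal] .
    then have "uminus ` (h ` S \<inter> U) = h ` S \<inter> U" using U_anti
      by (simp add: image_Int inj_def)
    moreover have "0 \<notin> h ` S \<inter> U"
    proof
      assume "0 \<in> h ` S \<inter> U"
      then obtain x where "x \<in> S" "h x = 0" by auto
      then have "norm x = 2" using S_sub unfolding leech_min_def by auto
      moreover have "norm (h x) = norm x" using that unfolding Co0_def by auto
      ultimately show False using \<open>h x = 0\<close> by simp
    qed
    ultimately show ?thesis unfolding c_def by (rule even_card_antipodal)
  qed
  have id_Co0: "id \<in> Co0" unfolding Co0_def by (simp add: linear_id)
  let ?M = "Max (insert 0 ((\<lambda>h. \<bar>\<delta> h\<bar>) ` Gminus))"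
  have fl0: "floor2 0 = 0" unfolding floor2_def by simp
  show ?thesis
  proof (cases "finite Co0")
    case False
    then have "E = 0" using E_def by simp
    then have "Gminus = {}" using Gminus_def delta_def by auto
    then show ?thesis using \<open>E = 0\<close> fl0 by simp
  next
    case fin: True
    show ?thesis
    proof (cases "Gminus = {}")
      case True
      have ge: "\<forall>h\<in>Co0. real (c h) \<ge> E" using True Gminus_def delta_def c_def by force
      have cpos: "real (card Co0) > 0" using fin id_Co0 card_gt_0_iff by fastforce
      have "(\<Sum>h\<in>Co0. real (c h) - E) = (\<Sum>h\<in>Co0. real (c h)) - real (card Co0) * E"
        by (simp add: sum_subtractf)
      also have "\<dots> = 0" using E_def cpos unfolding c_def by simp
      finally have s0: "(\<Sum>h\<in>Co0. real (c h) - E) = 0" .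
      have "\<forall>h\<in>Co0. real (c h) - E = 0"
      proof
        fix h assume "h \<in> Co0"
        moreover have "\<forall>h\<in>Co0. real (c h) - E \<ge> 0" using ge by simp
        ultimately show "real (c h) - E = 0"
          using sum_nonneg_eq_0_iff[OF fin, of "\<lambda>h. real (c h) - E"] s0 by blast
      qed
      then have EE: "E = real (c id)" using id_Co0 by auto
      have "floor2 E = E"
      proof -
        obtain t where t: "c id = 2 * t" using c_even[OF id_Co0] by blast
        have "E / 2 = real t" using EE t by simp
        then show ?thesis unfolding floor2_def using EE t by simp
      qed
      then show ?thesis using True by simp
    next
      case False
      have finG: "finite Gminus" using fin Gminus_def by simp
      have fin2: "finite (insert 0 ((\<lambda>h. \<bar>\<delta> h\<bar>) ` Gminus))" using finG by simp
      have Min: "?M \<in> insert 0 ((\<lambda>h. \<bar>\<delta> h\<bar>) ` Gminus)" using fin2 Max_in by blast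
      obtain h1 where h1: "h1 \<in> Gminus" using False by blast
      have "\<bar>\<delta> h1\<bar> \<le> ?M" using fin2 h1 by (intro Max_ge) auto
      moreover have "\<bar>\<delta> h1\<bar> > 0" using h1 Gminus_def by auto
      ultimately have "?M \<noteq> 0" by linarith
      then obtain h0 where h0: "h0 \<in> Gminus" "?M = \<bar>\<delta> h0\<bar>" using Min by auto
      have h0C: "h0 \<in> Co0" and lt: "real (c h0) < E" using h0 Gminus_def delta_def c_def by auto
      have Mv: "?M = E - real (c h0)" using h0 lt delta_def c_def by simp
      obtain t where t: "c h0 = 2 * t" using c_even[OF h0C] by blast
      have "real t < E / 2" using lt t by simp
      then have tle: "int t \<le> \<lfloor>E / 2\<rfloor>" by linarith
      have "?M = E - floor2 E + 2 * (real_of_int \<lfloor>E / 2\<rfloor> - real t)"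
        using Mv t unfolding floor2_def by simp
      moreover have "int t = \<lfloor>E / 2\<rfloor> \<or> int t + 1 \<le> \<lfloor>E / 2\<rfloor>" using tle by linarith
      ultimately show ?thesis
      proof (elim disjE)
        assume M: "?M = E - floor2 E + 2 * (real_of_int \<lfloor>E / 2\<rfloor> - real t)"
          and "int t = \<lfloor>E / 2\<rfloor>"
        then have "real t = real_of_int \<lfloor>E / 2\<rfloor>" by (metis of_int_of_nat_eq)
        then show ?thesis using M by simp
      next
        assume M: "?M = E - floor2 E + 2 * (real_of_int \<lfloor>E / 2\<rfloor> - real t)"
          and "int t + 1 \<le> \<lfloor>E / 2\<rfloor>"
        then have "real t + 1 \<le> real_of_int \<lfloor>E / 2\<rfloor>"
          by (metis of_int_1 of_int_add of_int_le_iff of_int_of_nat_eq)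
        then have "2 * (real_of_int \<lfloor>E / 2\<rfloor> - real t) \<ge> 2" by (rule aux2)
        then have "?M \<ge> E - floor2 E + 2" by (rule aux3[OF M])
        then show ?thesis by (rule disjI2)
      qed
    qed
  qed
qed

end
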